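(* Let $A\in\mathbb{R}^{m\times n}$ with $m>n$ be a full-rank standardized matrix with no two distinct rows parallel, let $x\in\mathbb{R}^n$, and let $b=Ax$. Let $x_k$ denote the $k$-th iterate of the two-subspace Kaczmarz method applied to $(A,b)$ from a deterministic starting point $x_0$. Then for every $k\ge 0$, $$\mathbb{E}\|x-x_k\|_2^2\le\left(\left(1-\frac1R\right)^2-\frac{D}{R}\right)^k\|x-x_0\|_2^2,$$ where $D=\min\left\{\frac{\delta^2(1-\delta)}{1+\delta},\frac{\Delta^2(1-\Delta)}{1+\Delta}\right\}$.
   Context: $A\in\mathbb{R}^{m\times n}$ has rows $a_1,\dots,a_m$. It is called standardized if $\|a_i\|_2=1$ for all $i$. "No two distinct rows parallel" means $|\langle a_r,a_s\rangle|<1$ for all $r\ne s$. Two-subspace Kaczmarz method for $(A,b)$, $b\in\mathbb{R}^m$: start from $x_0\in\mathbb{R}^n$. For $k=1,2,\dots$, choose an ordered pair $(r,s)$ of distinct indices in $\{1,\dots,m\}$ uniformly at random among the $m^2-m$ such pairs, independently of all previous choices. Then set $\mu_k=\langle a_r,a_s\rangle$, $y_k=x_{k-1}+(b_s-\langle x_{k-1},a_s\rangle)a_s$, $v_k=\frac{a_r-\mu_k a_s}{\sqrt{1-\mu_k^2}}$, $\beta_k=\frac{b_r-b_s\mu_k}{\sqrt{1-\mu_k^2}}$, and $x_k=y_k+(\beta_k-\langle y_k,v_k\rangle)v_k$. Coherence parameters: $\Delta=\max_{j\ne k}|\langle a_j,a_k\rangle|$ and $\delta=\min_{j\ne k}|\langle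 a_j,a_k\rangle|$. Scaled condition number: $R=\|A\|_F^2\|A^{-1}\|^2$, where $\|A^{-1}\|=\inf\{M: M\|Az\|_2\ge\|z\|_2\ \text{for all } z\}$, i.e. the reciprocal of the smallest singular value of $A$. *)

theory Defs
  imports "HOL-Analysis.Analysis" "HOL-Probability.Probability"
begin

text \<open>Matrices A in R^(m x n) are elements of real^'n^'m; row i is A $ i.\<close>

definition standardized :: "real^'n^'m \<Rightarrow> bool" where
  "standardized A \<longleftrightarrow> (\<forall>i. norm (A $ i) = 1)"

definition no_parallel_rows :: "real^'n^'m \<Rightarrow> bool" where
  "no_parallel_rows A \<longleftrightarrow> (\<forall>r s. r \<noteq> s \<longrightarrow> \<bar>(A $ r) \<bullet> (A $ s)\<bar> < 1)"

definition coh_max :: "real^'n^'m \<Rightarrow> real" where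
  "coh_max A = Max {\<bar>(A $ j) \<bullet> (A $ k)\<bar> | j k. j \<noteq> k}"

definition coh_min :: "real^'n^'m \<Rightarrow> real" where
  "coh_min A = Min {\<bar>(A $ j) \<bullet> (A $ k)\<bar> | j k. j \<noteq> k}"

definition frob_sq :: "real^'n^'m \<Rightarrow> real" where
  "frob_sq A = (\<Sum>i\<in>UNIV. (\<Sum>j\<in>UNIV. (A $ i $ j)^2))"

definition inv_norm :: "real^'n^'m \<Rightarrow> real" where
  "inv_norm A = Inf {M. \<forall>z. M * norm (A *v z) \<ge> norm z}"

definition scaled_cond :: "real^'n^'m \<Rightarrow> real" where
  "scaled_cond A = frob_sq A * (inv_norm A)^2"

definition tsk_step :: "real^'n^'m \<Rightarrow> real^'m \<Rightarrow> real^'n \<Rightarrow> 'm \<times> 'm \<Rightarrow> real^'n" where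
  "tsk_step A b xp p = (case p of (r, s) \<Rightarrow>
     let \<mu> = (A $ r) \<bullet> (A $ s);
         y = xp + (b $ s - xp \<bullet> (A $ s)) *\<^sub>R (A $ s);
         v = (1 / sqrt (1 - \<mu>^2)) *\<^sub>R (A $ r - \<mu> *\<^sub>R (A $ s));
         \<beta> = (b $ r - b $ s * \<mu>) / sqrt (1 - \<mu>^2)
     in y + (\<beta> - y \<bullet> v) *\<^sub>R v)"

definition tsk_iter :: "real^'n^'m \<Rightarrow> real^'m \<Rightarrow> real^'n \<Rightarrow> ('m \<times> 'm) list \<Rightarrow> real^'n" where
  "tsk_iter A b x0 ps = foldl (tsk_step A b) x0 ps"

definition ordered_pairs :: "('m \<times> 'm) set" where
  "ordered_pairs = {(r, s). r \<noteq> s}"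

text \<open>Law of the first k choices: k independent uniform choices from the ordered pairs,
  i.e. the uniform distribution on length-k sequences of such pairs.\<close>
definition pair_seqs :: "nat \<Rightarrow> ('m \<times> 'm) list set" where
  "pair_seqs k = {ps. length ps = k \<and> set ps \<subseteq> ordered_pairs}"

definition tsk_expected_sq_err ::
  "real^'n^'m \<Rightarrow> real^'m \<Rightarrow> real^'n \<Rightarrow> real^'n \<Rightarrow> nat \<Rightarrow> real" where
  "tsk_expected_sq_err A b x0 x k =
     measure_pmf.expectation (pmf_of_set (pair_seqs k)) (\<lambda>ps. (norm (x - tsk_iter A b x0 ps))^2)"

end

theory Submission
  imports Defs
begin

lemma fdiff:
  fixes a t :: real
  assumes "0 \<le> a" "0 \<le> t" "a < 1" "t < 1"
  shows "t^2*(1-t)/(1+t) - a^2*(1-a)/(1+a) = (t-a)*(a*(1-a-t^2)+t*(1-t-a^2))/((1+a)*(1+t))"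
  using assms by (simp add: field_simps) (simp add: algebra_simps power2_eq_square)

lemma unimodal:
  fixes a t c :: real
  assumes "0 \<le> a" "a \<le> t" "t \<le> c" "c < 1"
  shows "min (a^2*(1-a)/(1+a)) (c^2*(1-c)/(1+c)) \<le> t^2*(1-t)/(1+t)"
proof (cases "1 - t - t^2 \<ge> 0")
  case True
  have q: "a*(1-a-t^2)+t*(1-t-a^2) \<ge> 0"
  proof -
    have "a^2 \<le> t^2" using assms by (simp add: power_mono)
    hence "1-a-t^2 \<ge> 0" "1-t-a^2 \<ge> 0" using True assms by linarith+
    thus ?thesis using assms by (simp add: add_nonneg_nonneg)
  qed
  have "t^2*(1-t)/(1+t) - a^2*(1-a)/(1+a) \<ge> 0"
    using fdiff[of a t] assms q by (simp add: divide_nonneg_pos)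
  thus ?thesis by linarith
next
  case False
  have q: "t*(1-t-c^2)+c*(1-c-t^2) \<le> 0"
  proof -
    have "t^2 \<le> c^2" using assms by (simp add: power_mono)
    hence "1-t-c^2 \<le> 0" "1-c-t^2 \<le> 0" using False assms by linarith+
    thus ?thesis using assms by (meson add_nonpos_nonpos le_less_trans mult_nonneg_nonpos order.trans)
  qed
  have "c^2*(1-c)/(1+c) - t^2*(1-t)/(1+t) \<le> 0"
    using fdiff[of t c] assms q by (simp add: divide_nonpos_pos mult_nonneg_nonpos)
  thus ?thesis by linarith
qed

lemma arith_final:
  fixes m \<rho> D E S :: real
  assumes "m \<ge> 2" "\<rho> > 0" "D \<ge> 0" "E \<ge> 0" "m*\<rho>*E \<le> S" "S \<le> m*E"
  shows "m*(m-1)*E - (m-1)*S - m*\<rho>*(m*E-S) - D*(m-1)*S \<le> ((1-\<rho>)^2 - D*\<rho>) * (m*(m-1)*E)"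
proof (cases "E = 0")
  case True thus ?thesis using assms by simp
next
  case False
  hence E: "E > 0" using assms by simp
  have "(m*E)*\<rho> \<le> (m*E)*1" using assms by (simp add: mult.commute mult.left_commute)
  moreover have "m*E > 0" using E assms by simp
  ultimately have "\<rho> \<le> 1" by (meson mult_le_cancel_left_pos)
  define s where "s = S/m"
  define t where "t = s - \<rho>*E"
  have S: "S = m*(\<rho>*E + t)" using assms unfolding t_def s_def by simp
  have t0: "t \<ge> 0" and t1: "t \<le> (1-\<rho>)*E" using assms unfolding t_def s_def
    by (simp_all add: field_simps)
  have key: "t*((m-1)*(1+D) - m*\<rho>) + \<rho>*(1-\<rho>)*E \<ge> 0"
  proof (cases "(m-1)*(1+D) - m*\<rho> \<ge> 0")
    case True thus ?thesis using t0 \<open>\<rho>\<le>1\<close> E assms by (simp add: add_nonneg_nonneg)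
  next
    case False
    have "t*((m-1)*(1+D) - m*\<rho>) \<ge> (1-\<rho>)*E*((m-1)*(1+D) - m*\<rho>)"
      using t1 False by (simp add: mult_right_mono_neg)
    moreover have "(1-\<rho>)*E*((m-1)*(1+D) - m*\<rho>) + \<rho>*(1-\<rho>)*E = (1-\<rho>)*E*((m-1)*(1+D-\<rho>))"
      by (simp add: algebra_simps)
    moreover have "(1-\<rho>)*E*((m-1)*(1+D-\<rho>)) \<ge> 0" using \<open>\<rho>\<le>1\<close> E assms by simp
    ultimately show ?thesis by linarith
  qed
  have "((1-\<rho>)^2 - D*\<rho>) * (m*(m-1)*E) - (m*(m-1)*E - (m-1)*S - m*\<rho>*(m*E-S) - D*(m-1)*S)
        = m*(t*((m-1)*(1+D) - m*\<rho>) + \<rho>*(1-\<rho>)*E)"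
    unfolding S by (simp add: algebra_simps power2_eq_square)
  moreover have "m*(t*((m-1)*(1+D) - m*\<rho>) + \<rho>*(1-\<rho>)*E) \<ge> 0" using key assms by simp
  ultimately show ?thesis by linarith
qed


lemma mv_row: "(A *v z) $ r = (A $ r) \<bullet> (z::real^'n)"
  for A :: "real^'n^'m"
  by (simp add: matrix_vector_mult_def inner_vec_def mult.commute)

lemma norm_mv_sq: "(norm (A *v z))^2 = (\<Sum>r\<in>UNIV. ((A $ r) \<bullet> z)^2)"
  for A :: "real^'n^'m"
  unfolding power2_norm_eq_inner inner_vec_def mv_row by (simp add: power2_eq_square)

lemma step_err:
  fixes A :: "real^'n^'m" and x xk :: "real^'n"
  assumes std: "standardized A" and mu: "\<bar>(A$r) \<bullet> (A$s)\<bar> < 1" and bx: "b = A *v x"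
  shows "(norm (x - tsk_step A b xk (r,s)))^2 = (norm (x-xk))^2 - ((A$s)\<bullet>(x-xk))^2
     - ((A$r)\<bullet>(x-xk) - ((A$r) \<bullet> (A$s))*((A$s)\<bullet>(x-xk)))^2/(1-((A$r) \<bullet> (A$s))^2)"
proof -
  define a where "a = A$r"
  define c where "c = A$s"
  define \<mu> where "\<mu> = a \<bullet> c"
  define d where "d = x - xk"
  define w where "w = c \<bullet> d"
  define sq where "sq = sqrt (1 - \<mu>^2)"
  define v where "v = (1/sq) *\<^sub>R (a - \<mu> *\<^sub>R c)"
  define y where "y = xk + (b $ s - xk \<bullet> c) *\<^sub>R c"
  define \<beta> where "\<beta> = (b $ r - b $ s * \<mu>) / sq"
  have ca: "c \<bullet> c = 1" "a \<bullet> a = 1" using std unfolding standardized_def a_def c_def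
    by (simp_all add: norm_eq_sqrt_inner)
  have mu2: "\<mu>^2 < 1" using mu unfolding \<mu>_def a_def c_def by (simp add: abs_square_less_1)
  have sqp: "sq > 0" and sq2: "sq^2 = 1 - \<mu>^2" using mu2 unfolding sq_def by auto
  have bs: "b $ s = c \<bullet> x" "b $ r = a \<bullet> x" using bx by (simp_all add: mv_row a_def c_def)
  have step: "tsk_step A b xk (r,s) = y + (\<beta> - y \<bullet> v) *\<^sub>R v"
    unfolding tsk_step_def Let_def y_def v_def \<beta>_def sq_def \<mu>_def a_def c_def by simp
  define z where "z = x - y"
  have z: "z = d - w *\<^sub>R c" unfolding z_def y_def d_def w_def bs
    by (simp add: algebra_simps inner_diff_right inner_commute)
  have beta: "\<beta> = x \<bullet> v" unfolding \<beta>_def v_def bs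
    by (simp add: inner_diff_right inner_commute divide_simps)
  have xs: "x - tsk_step A b xk (r,s) = z - (z \<bullet> v) *\<^sub>R v"
    unfolding step beta z_def by (simp add: inner_diff_left algebra_simps)
  have vv: "v \<bullet> v = 1"
  proof -
    have "v \<bullet> v = (1/sq)^2 * ((a - \<mu> *\<^sub>R c) \<bullet> (a - \<mu> *\<^sub>R c))"
      unfolding v_def by (simp add: power2_eq_square)
    also have "(a - \<mu> *\<^sub>R c) \<bullet> (a - \<mu> *\<^sub>R c) = 1 - \<mu>^2"
      using ca unfolding \<mu>_def by (simp add: inner_diff_left inner_diff_right inner_commute power2_eq_square)
    finally show ?thesis using sq2 sqp mu2 by (simp add: power_divide)
  qed
  have zz: "z \<bullet> z = d \<bullet> d - w^2"
    unfolding z using ca unfolding w_def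
    by (simp add: inner_diff_left inner_diff_right inner_commute power2_eq_square)
  have zv: "z \<bullet> v = (a \<bullet> d - \<mu> * w) / sq"
    unfolding z v_def using ca unfolding w_def \<mu>_def
    by (simp add: inner_diff_left inner_diff_right inner_commute algebra_simps divide_simps)
  have "(norm (x - tsk_step A b xk (r,s)))^2 = z \<bullet> z - (z \<bullet> v)^2"
    unfolding xs power2_norm_eq_inner using vv
    by (simp add: inner_diff_left inner_diff_right inner_commute power2_eq_square)
  also have "\<dots> = d \<bullet> d - w^2 - (a \<bullet> d - \<mu> * w)^2 / (1-\<mu>^2)"
    unfolding zz zv using sq2 by (simp add: power_divide)
  finally show ?thesis unfolding a_def c_def \<mu>_def d_def w_def power2_norm_eq_inner
    by (simp add: inner_commute)
qed


lemma pointwise: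
  fixes \<mu> u w dl Dl :: real
  assumes "0 \<le> dl" "dl \<le> \<bar>\<mu>\<bar>" "\<bar>\<mu>\<bar> \<le> Dl" "Dl < 1"
  shows "min (dl^2*(1-dl)/(1+dl)) (Dl^2*(1-Dl)/(1+Dl)) * (u^2+w^2)
         \<le> \<mu>^2/(1-\<mu>^2) * ((u-\<mu>*w)^2 + (w-\<mu>*u)^2)"
proof -
  define t where "t = \<bar>\<mu>\<bar>"
  have t0: "0 \<le> t" "t < 1" using assms unfolding t_def by auto
  have t2: "\<mu>^2 = t^2" unfolding t_def by simp
  have uw: "2*\<bar>u\<bar>*\<bar>w\<bar> \<le> u^2+w^2"
  proof -
    have "0 \<le> (\<bar>u\<bar>-\<bar>w\<bar>)^2" by simp
    thus ?thesis by (simp add: power2_eq_square algebra_simps)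
  qed
  have "\<mu>*u*w \<le> t*\<bar>u\<bar>*\<bar>w\<bar>" unfolding t_def
    by (metis abs_ge_self abs_mult mult.assoc)
  also have "\<dots> \<le> t*((u^2+w^2)/2)" using uw t0 by (simp add: mult.assoc mult_left_mono)
  finally have muw: "\<mu>*u*w \<le> t*((u^2+w^2)/2)" .
  have sq: "(1-t)^2*(u^2+w^2) \<le> (u-\<mu>*w)^2 + (w-\<mu>*u)^2"
  proof -
    have "(u-\<mu>*w)^2 + (w-\<mu>*u)^2 = (1+\<mu>^2)*(u^2+w^2) - 4*(\<mu>*u*w)"
      by (simp add: power2_eq_square algebra_simps)
    hence "(u-\<mu>*w)^2 + (w-\<mu>*u)^2 = (1+t^2)*(u^2+w^2) - 4*(\<mu>*u*w)"
      using t2 by simp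
    moreover have "(1-t)^2*(u^2+w^2) = (1+t^2)*(u^2+w^2) - 4*(t*((u^2+w^2)/2))"
      by (simp add: power2_eq_square algebra_simps)
    ultimately show ?thesis using muw by linarith
  qed
  have "t^2 < 1" using t0 by (simp add: abs_square_less_1)
  hence g0: "\<mu>^2/(1-\<mu>^2) \<ge> 0" using t2 by (simp add: divide_nonneg_pos)
  have ft: "\<mu>^2/(1-\<mu>^2)*(1-t)^2 = t^2*(1-t)/(1+t)"
  proof -
    have e: "1-\<mu>^2 = (1-t)*(1+t)" using t2 by (simp add: power2_eq_square algebra_simps)
    have n: "1-t \<noteq> 0" "1+t \<noteq> 0" using t0 by auto
    have "\<mu>^2/(1-\<mu>^2)*(1-t)^2 = t^2*((1-t)*(1-t))/((1-t)*(1+t))"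
      using t2 by (subst e) (simp add: power2_eq_square)
    also have "\<dots> = (t^2*(1-t))*(1-t)/((1+t)*(1-t))" by (simp add: mult.commute mult.left_commute)
    also have "\<dots> = t^2*(1-t)/(1+t)" using nonzero_mult_divide_mult_cancel_right[OF n(1)] by blast
    finally show ?thesis .
  qed
  have D: "min (dl^2*(1-dl)/(1+dl)) (Dl^2*(1-Dl)/(1+Dl)) \<le> t^2*(1-t)/(1+t)"
    using unimodal[of dl t Dl] assms unfolding t_def by simp
  have "min (dl^2*(1-dl)/(1+dl)) (Dl^2*(1-Dl)/(1+Dl)) * (u^2+w^2) \<le> t^2*(1-t)/(1+t) * (u^2+w^2)"
    using D by (intro mult_right_mono) auto
  also have "\<dots> = (\<mu>^2/(1-\<mu>^2)*(1-t)^2)*(u^2+w^2)" using ft by simp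
  also have "\<dots> = \<mu>^2/(1-\<mu>^2)*((1-t)^2*(u^2+w^2))" by (simp only: mult.assoc)
  also have "\<dots> \<le> \<mu>^2/(1-\<mu>^2) * ((u-\<mu>*w)^2 + (w-\<mu>*u)^2)"
    using sq g0 by (rule mult_left_mono)
  finally show ?thesis .
qed

lemma inv_norm_bound:
  fixes A :: "real^'n^'m"
  assumes "rank A = CARD('n)"
  shows "inv_norm A > 0" "\<And>z. norm z \<le> inv_norm A * norm (A *v z)"
proof -
  have inj: "inj ((*v) A)" using assms full_rank_injective by blast
  obtain B where B: "B > 0" "\<And>x. B * norm x \<le> norm (A *v x)"
    using linear_inj_bounded_below_pos[OF matrix_vector_mul_linear inj] by blast
  define S where "S = {M. \<forall>z. M * norm (A *v z) \<ge> norm z}"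
  have "1/B \<in> S" unfolding S_def using B by (auto simp: divide_simps mult.commute)
  hence ne: "S \<noteq> {}" by blast
  have key: "norm z / norm (A *v z) \<le> Inf S" if "z \<noteq> 0" for z
  proof (rule cInf_greatest[OF ne])
    have "A *v z \<noteq> 0" using inj that by (metis injD matrix_vector_mult_0_right)
    hence p: "norm (A *v z) > 0" by simp
    fix M assume "M \<in> S"
    hence "M * norm (A *v z) \<ge> norm z" unfolding S_def by blast
    thus "norm z / norm (A *v z) \<le> M" using p by (simp add: divide_simps)
  qed
  have invS: "inv_norm A = Inf S" unfolding inv_norm_def S_def by simp
  show "norm z \<le> inv_norm A * norm (A *v z)" for z
  proof (cases "z = 0")
    case True thus ?thesis by simp
  next
    case False
    have "A *v z \<noteq> 0" using inj False by (metis injD matrix_vector_mult_0_right)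
    hence p: "norm (A *v z) > 0" by simp
    have "norm z / norm (A *v z) \<le> inv_norm A" using key[OF False] invS by simp
    thus ?thesis using p by (simp add: divide_simps)
  qed
  obtain i :: 'n where True by blast
  have z1: "(axis i 1 :: real^'n) \<noteq> 0" by (simp add: axis_eq_0_iff)
  have "0 < norm (axis i 1 :: real^'n) / norm (A *v axis i 1)"
    using z1 inj by (metis injD matrix_vector_mult_0_right zero_less_norm_iff divide_pos_pos)
  thus "inv_norm A > 0" using key[OF z1] invS by linarith
qed

lemma frob_std:
  fixes A :: "real^'n^'m"
  assumes "standardized A"
  shows "frob_sq A = real CARD('m)"
proof -
  have "(\<Sum>j\<in>UNIV. (A $ i $ j)^2) = 1" for i
  proof -
    have "(\<Sum>j\<in>UNIV. (A $ i $ j)^2) = (norm (A$i))^2"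
      unfolding power2_norm_eq_inner inner_vec_def by (simp add: power2_eq_square)
    thus ?thesis using assms unfolding standardized_def by simp
  qed
  thus ?thesis unfolding frob_sq_def by simp
qed


lemma coh:
  fixes A :: "real^'n^'m"
  assumes np: "no_parallel_rows A" and rs: "r \<noteq> s"
  shows "coh_min A \<le> \<bar>A$r \<bullet> A$s\<bar>" "\<bar>A$r \<bullet> A$s\<bar> \<le> coh_max A" "0 \<le> coh_min A" "coh_max A < 1"
proof -
  define C where "C = {\<bar>(A $ j) \<bullet> (A $ k)\<bar> | j k. j \<noteq> k}"
  have fin: "finite C"
    by (rule finite_subset[of _ "range (\<lambda>p. \<bar>(A $ fst p) \<bullet> (A $ snd p)\<bar>)"]) (auto simp: C_def image_iff, blast)
  have inC: "\<bar>A$r \<bullet> A$s\<bar> \<in> C" using rs unfolding C_def by blast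
  hence ne: "C \<noteq> {}" by blast
  have cm: "coh_min A = Min C" "coh_max A = Max C" unfolding coh_min_def coh_max_def C_def by simp_all
  show "coh_min A \<le> \<bar>A$r \<bullet> A$s\<bar>" unfolding cm using fin inC by simp
  show "\<bar>A$r \<bullet> A$s\<bar> \<le> coh_max A" unfolding cm using fin inC by simp
  have "Min C \<in> C" using fin ne by (rule Min_in)
  thus "0 \<le> coh_min A" unfolding cm C_def by auto
  have "Max C \<in> C" using fin ne by (rule Max_in)
  thus "coh_max A < 1" unfolding cm C_def using np unfolding no_parallel_rows_def by auto
qed

lemma sum_op:
  fixes G :: "'m::finite \<times> 'm \<Rightarrow> real"
  shows "(\<Sum>p\<in>(ordered_pairs::('m\<times>'m) set). G p) = (\<Sum>r\<in>UNIV. \<Sum>s\<in>UNIV. G (r,s)) - (\<Sum>r\<in>UNIV. G (r,r))"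
proof -
  define Dg where "Dg = range (\<lambda>r::'m. (r,r))"
  have op: "(ordered_pairs::('m\<times>'m) set) = UNIV - Dg" unfolding ordered_pairs_def Dg_def by auto
  have "sum G UNIV = sum G (UNIV - Dg) + sum G Dg" by (rule sum.subset_diff) auto
  moreover have "sum G Dg = (\<Sum>r\<in>UNIV. G (r,r))" unfolding Dg_def
    by (subst sum.reindex) (auto simp: inj_on_def)
  moreover have "sum G UNIV = (\<Sum>r\<in>UNIV. \<Sum>s\<in>UNIV. G (r,s))"
    by (simp add: sum.cartesian_product UNIV_Times_UNIV[symmetric] del: UNIV_Times_UNIV)
  ultimately show ?thesis unfolding op by simp
qed

lemma sum_op_swap:
  fixes G :: "'m::finite \<times> 'm \<Rightarrow> real"
  shows "(\<Sum>p\<in>(ordered_pairs::('m\<times>'m) set). G (prod.swap p)) = (\<Sum>p\<in>ordered_pairs. G p)"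
proof -
  have "prod.swap ` (ordered_pairs::('m\<times>'m) set) = ordered_pairs"
    unfolding ordered_pairs_def by (auto simp: image_iff)
  moreover have "inj_on prod.swap (ordered_pairs::('m\<times>'m) set)" by (rule inj_swap)
  ultimately show ?thesis using sum.reindex[of prod.swap ordered_pairs G] by simp
qed

lemma card_op: "real (card (ordered_pairs::('m::finite\<times>'m) set)) = real CARD('m) * (real CARD('m) - 1)"
proof -
  have "real (card (ordered_pairs::('m\<times>'m) set)) = (\<Sum>p\<in>(ordered_pairs::('m\<times>'m) set). 1)" by simp
  also have "\<dots> = real CARD('m) * real CARD('m) - real CARD('m)" by (subst sum_op) simp
  finally show ?thesis by (simp add: algebra_simps)
qed


lemma one_step:
  fixes A :: "real^'n^'m" and x xk :: "real^'n" and b :: "real^'m"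
  assumes mn: "CARD('m) > CARD('n)" and rk: "rank A = CARD('n)" and std: "standardized A"
    and np: "no_parallel_rows A" and bx: "b = A *v x"
  shows "(\<Sum>p\<in>(ordered_pairs::('m\<times>'m) set). (norm (x - tsk_step A b xk p))^2) \<le>
     ((1 - 1 / scaled_cond A)^2 - min ((coh_min A)^2 * (1 - coh_min A) / (1 + coh_min A))
                                       ((coh_max A)^2 * (1 - coh_max A) / (1 + coh_max A))
                                 / scaled_cond A) * real (card (ordered_pairs::('m\<times>'m) set)) * (norm (x - xk))^2"
proof -
  define d where "d = x - xk"
  define u where "u i = (A$i) \<bullet> d" for i
  define \<mu> where "\<mu> r s = (A$r) \<bullet> (A$s)" for r s
  define E where "E = (norm d)^2"
  define S where "S = (\<Sum>i\<in>UNIV. (u i)^2)"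
  define m where "m = real CARD('m)"
  define iv where "iv = inv_norm A"
  define dl where "dl = coh_min A"
  define Dl where "Dl = coh_max A"
  define D where "D = min (dl^2 * (1 - dl) / (1 + dl)) (Dl^2 * (1 - Dl) / (1 + Dl))"
  define OP where "OP = (ordered_pairs::('m\<times>'m) set)"
  have "CARD('n) \<ge> 1" by (simp add: Suc_leI)
  hence m2: "m \<ge> 2" using mn unfolding m_def by linarith
  have cardOP: "real (card OP) = m*(m-1)" unfolding OP_def m_def by (rule card_op)
  have iv0: "iv > 0" and ivb: "\<And>z. norm z \<le> iv * norm (A *v z)"
    using inv_norm_bound[OF rk] unfolding iv_def by auto
  have ivb2: "(norm z)^2 / iv^2 \<le> (norm (A *v z))^2" for z
  proof -
    have "(norm z)^2 \<le> (iv * norm (A *v z))^2" using ivb[of z] by (simp add: power_mono)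
    thus ?thesis using iv0 by (simp add: divide_simps power_mult_distrib mult.commute)
  qed
  have R: "scaled_cond A = m * iv^2" unfolding scaled_cond_def frob_std[OF std] m_def iv_def by simp
  have mudiag: "\<mu> r r = 1" for r using std unfolding \<mu>_def standardized_def
    by (simp add: norm_eq_sqrt_inner)
  have musym: "\<mu> r s = \<mu> s r" for r s unfolding \<mu>_def by (simp add: inner_commute)
  have muabs: "\<bar>\<mu> r s\<bar> < 1" if "r \<noteq> s" for r s using np that unfolding no_parallel_rows_def \<mu>_def by blast
  obtain r0 s0 :: 'm where rs0: "r0 \<noteq> s0"
  proof -
    obtain r0 :: 'm where True by blast
    have "\<exists>s0. s0 \<noteq> r0"
    proof (rule ccontr)
      assume "\<not> (\<exists>s0. s0 \<noteq> r0)"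
      hence "UNIV = {r0}" by auto
      hence "CARD('m) = Suc 0" by (metis card_1_singleton_iff)
      hence "m = 1" unfolding m_def by simp
      thus False using m2 by simp
    qed
    thus ?thesis using that by metis
  qed
  have cohb: "\<And>r s. r \<noteq> s \<Longrightarrow> dl \<le> \<bar>\<mu> r s\<bar> \<and> \<bar>\<mu> r s\<bar> \<le> Dl"
      using coh[OF np] unfolding dl_def Dl_def \<mu>_def by blast
  have dl0: "0 \<le> dl" and Dl1: "Dl < 1" using coh[OF np rs0] unfolding dl_def Dl_def by blast+
  have dlDl: "dl \<le> Dl" using cohb[OF rs0] by linarith
  have D0: "D \<ge> 0"
  proof -
    have "dl^2 * (1 - dl) / (1 + dl) \<ge> 0" using dl0 dlDl Dl1 by simp
    moreover have "Dl^2 * (1 - Dl) / (1 + Dl) \<ge> 0" using dl0 dlDl Dl1 by simp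
    ultimately show ?thesis unfolding D_def by simp
  qed

  have Snorm: "S = (norm (A *v d))^2" unfolding S_def u_def norm_mv_sq by simp
  have SE1: "E/iv^2 \<le> S" unfolding Snorm E_def using ivb2 .
  have ui: "(u i)^2 \<le> E" for i
  proof -
    have "\<bar>u i\<bar> \<le> norm (A$i) * norm d" unfolding u_def by (rule Cauchy_Schwarz_ineq2)
    hence "\<bar>u i\<bar> \<le> norm d" using std unfolding standardized_def by simp
    hence "\<bar>u i\<bar>^2 \<le> (norm d)^2" by (rule power_mono) simp
    thus ?thesis unfolding E_def by simp
  qed
  have SE2: "S \<le> m*E" unfolding S_def m_def using sum_bounded_above[of UNIV "\<lambda>i. (u i)^2" E] ui by simp
  define q where "q r s = (u r - \<mu> r s * u s)^2" for r s
  define h where "h r s = (\<mu> r s)^2/(1-(\<mu> r s)^2) * q r s" for r s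
  have termeq: "(norm (x - tsk_step A b xk p))^2 = E - (u (snd p))^2 - q (fst p) (snd p) - h (fst p) (snd p)"
    if "p \<in> OP" for p
  proof -
    obtain r s where p: "p = (r,s)" by (cases p)
    have rs: "r \<noteq> s" using that unfolding p OP_def ordered_pairs_def by simp
    have "(\<mu> r s)^2 < 1" using muabs[OF rs] by (simp add: abs_square_less_1)
    hence mu1: "1 - (\<mu> r s)^2 \<noteq> 0" by simp
    have "(norm (x - tsk_step A b xk p))^2 = E - (u s)^2 - q r s / (1 - (\<mu> r s)^2)"
      unfolding p step_err[OF std muabs[OF rs, unfolded \<mu>_def] bx] E_def d_def u_def q_def \<mu>_def
      by (simp add: mult.commute)
    also have "q r s / (1 - (\<mu> r s)^2) = q r s + h r s" unfolding h_def using mu1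
      by (simp add: field_simps)
    finally show ?thesis unfolding p by simp
  qed
  have P1: "(\<Sum>p\<in>OP. (u (snd p))^2) = (m-1)*S"
    unfolding OP_def sum_op S_def m_def by (simp add: algebra_simps)
  have P1': "(\<Sum>p\<in>OP. (u (fst p))^2) = (m-1)*S"
  proof -
    have "(\<Sum>r\<in>UNIV. \<Sum>s\<in>(UNIV::'m set). (u r)^2) = m * S" by (simp add: S_def m_def sum_distrib_left)
    thus ?thesis unfolding OP_def sum_op by (simp add: S_def[symmetric] algebra_simps)
  qed
  have Q: "(\<Sum>p\<in>OP. q (fst p) (snd p)) \<ge> (m*E - S)/iv^2"
  proof -
    have qd: "q r r = 0" for r unfolding q_def using mudiag by simp
    have "(\<Sum>p\<in>OP. q (fst p) (snd p)) = (\<Sum>r\<in>UNIV. \<Sum>s\<in>UNIV. q r s)"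
      unfolding OP_def sum_op using qd by simp
    also have "\<dots> = (\<Sum>s\<in>UNIV. \<Sum>r\<in>UNIV. q r s)" by (rule sum.swap)
    also have "\<dots> = (\<Sum>s\<in>UNIV. (norm (A *v (d - u s *\<^sub>R A$s)))^2)"
    proof (rule sum.cong[OF refl])
      fix s
      have "(A$r) \<bullet> (d - u s *\<^sub>R A$s) = u r - \<mu> r s * u s" for r
        unfolding u_def \<mu>_def by (simp add: inner_diff_right mult.commute)
      thus "(\<Sum>r\<in>UNIV. q r s) = (norm (A *v (d - u s *\<^sub>R A$s)))^2"
        unfolding norm_mv_sq q_def by simp
    qed
    also have "\<dots> \<ge> (\<Sum>s\<in>UNIV. (norm (d - u s *\<^sub>R A$s))^2 / iv^2)"
      by (rule sum_mono) (rule ivb2)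
    also have "(\<Sum>s\<in>UNIV. (norm (d - u s *\<^sub>R A$s))^2 / iv^2) = (\<Sum>s\<in>UNIV. (E - (u s)^2) / iv^2)"
    proof (rule sum.cong[OF refl])
      fix s
      have "(A$s) \<bullet> (A$s) = 1" using mudiag[of s] unfolding \<mu>_def .
      hence "(norm (d - u s *\<^sub>R A$s))^2 = E - (u s)^2"
        unfolding power2_norm_eq_inner E_def u_def
        by (simp add: inner_diff_left inner_diff_right inner_commute power2_eq_square)
      thus "(norm (d - u s *\<^sub>R A$s))^2 / iv^2 = (E - (u s)^2) / iv^2" by simp
    qed
    also have "\<dots> = (m*E - S)/iv^2"
      unfolding S_def m_def by (simp add: sum_divide_distrib[symmetric] sum_subtractf)
    finally show ?thesis .
  qed
  have H: "(\<Sum>p\<in>OP. h (fst p) (snd p)) \<ge> D*(m-1)*S"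
  proof -
    have "2*(\<Sum>p\<in>OP. h (fst p) (snd p)) = (\<Sum>p\<in>OP. h (fst p) (snd p)) + (\<Sum>p\<in>OP. h (snd p) (fst p))"
      using sum_op_swap[of "\<lambda>p. h (fst p) (snd p)"] unfolding OP_def by simp
    also have "\<dots> = (\<Sum>p\<in>OP. h (fst p) (snd p) + h (snd p) (fst p))" by (simp add: sum.distrib)
    also have "\<dots> \<ge> (\<Sum>p\<in>OP. D * ((u (fst p))^2 + (u (snd p))^2))"
    proof (rule sum_mono)
      fix p assume "p \<in> OP"
      then obtain r s where p: "p = (r,s)" and rs: "r \<noteq> s" unfolding OP_def ordered_pairs_def by auto
      have "D * ((u r)^2 + (u s)^2) \<le> (\<mu> r s)^2/(1-(\<mu> r s)^2) * ((u r - \<mu> r s * u s)^2 + (u s - \<mu> r s * u r)^2)"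
        unfolding D_def using pointwise[of dl "\<mu> r s" Dl "u r" "u s"] dl0 Dl1 cohb[OF rs] by blast
      also have "\<dots> = h r s + h s r" unfolding h_def q_def using musym[of s r]
        by (simp add: algebra_simps)
      finally show "D * ((u (fst p))^2 + (u (snd p))^2) \<le> h (fst p) (snd p) + h (snd p) (fst p)"
        unfolding p by simp
    qed
    also have "(\<Sum>p\<in>OP. D * ((u (fst p))^2 + (u (snd p))^2)) = 2*(D*(m-1)*S)"
      using P1 P1' by (simp add: sum_distrib_left[symmetric] sum.distrib)
    finally show ?thesis by simp
  qed
  have LHS: "(\<Sum>p\<in>OP. (norm (x - tsk_step A b xk p))^2)
      = real (card OP) * E - (\<Sum>p\<in>OP. (u (snd p))^2) - (\<Sum>p\<in>OP. q (fst p) (snd p)) - (\<Sum>p\<in>OP. h (fst p) (snd p))"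
    using termeq by (simp add: sum_subtractf)
  define \<rho> where "\<rho> = 1 / (m * iv^2)"
  have mrho: "m*\<rho> = 1/iv^2" unfolding \<rho>_def using m2 by simp
  have rho0: "\<rho> > 0" unfolding \<rho>_def using m2 iv0 by simp
  have E0: "E \<ge> 0" unfolding E_def by simp
  have AF: "m*(m-1)*E - (m-1)*S - m*\<rho>*(m*E-S) - D*(m-1)*S \<le> ((1-\<rho>)^2 - D*\<rho>) * (m*(m-1)*E)"
    by (rule arith_final) (use m2 rho0 D0 E0 SE1 SE2 mrho in auto)
  have "(\<Sum>p\<in>OP. (norm (x - tsk_step A b xk p))^2) \<le> m*(m-1)*E - (m-1)*S - m*\<rho>*(m*E-S) - D*(m-1)*S"
  proof -
    have "1/iv^2*(m*E-S) = (m*E-S)/iv^2" by simp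
    thus ?thesis unfolding LHS cardOP P1 mult.assoc[of m \<rho>, symmetric] mrho using Q H
      by (intro diff_mono) auto
  qed
  also note AF
  finally have fin: "(\<Sum>p\<in>OP. (norm (x - tsk_step A b xk p))^2) \<le> ((1-\<rho>)^2 - D*\<rho>) * (m*(m-1)*E)" .
  have rhoR: "1 / scaled_cond A = \<rho>" unfolding R \<rho>_def ..
  show ?thesis using fin unfolding OP_def[symmetric] cardOP D_def[symmetric] dl_def[symmetric] Dl_def[symmetric]
     E_def d_def[symmetric]
    by (simp add: rhoR[symmetric] mult.assoc divide_inverse)
qed


lemma seqs_succ: "pair_seqs (Suc k) = (\<lambda>(p,ps). p # ps) ` ((ordered_pairs::('m\<times>'m) set) \<times> pair_seqs k)"
proof (rule set_eqI)
  fix xs :: "('m\<times>'m) list"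
  show "xs \<in> pair_seqs (Suc k) \<longleftrightarrow> xs \<in> (\<lambda>(p,ps). p # ps) ` (ordered_pairs \<times> pair_seqs k)"
    by (cases xs) (auto simp: pair_seqs_def image_iff)
qed

lemma seqs_inj: "inj_on (\<lambda>(p,ps). p # ps) (X \<times> Y)"
  by (auto simp: inj_on_def)

lemma seqs_fin_card:
  "finite (pair_seqs k :: ('m::finite\<times>'m) list set) \<and> card (pair_seqs k :: ('m\<times>'m) list set) = card (ordered_pairs::('m\<times>'m) set) ^ k"
proof (induction k)
  case 0
  have "(pair_seqs 0 :: ('m\<times>'m) list set) = {[]}" unfolding pair_seqs_def by auto
  thus ?case by simp
next
  case (Suc k)
  show ?case unfolding seqs_succ using Suc
    by (simp add: card_image[OF seqs_inj] card_cartesian_product)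
qed

lemma sum_seqs_succ:
  fixes F :: "('m::finite\<times>'m) list \<Rightarrow> real"
  shows "(\<Sum>ps\<in>pair_seqs (Suc k). F ps) = (\<Sum>p\<in>(ordered_pairs::('m\<times>'m) set). \<Sum>ps\<in>pair_seqs k. F (p # ps))"
  unfolding seqs_succ
  by (subst sum.reindex[OF seqs_inj]) (simp add: sum.cartesian_product case_prod_unfold)

theorem theorem1:
  fixes A :: "real^'n^'m" and x x0 :: "real^'n" and b :: "real^'m"
  assumes "CARD('m) > CARD('n)"
    and "rank A = CARD('n)"
    and "standardized A"
    and "no_parallel_rows A"
    and "b = A *v x"
  shows "\<forall>k::nat. tsk_expected_sq_err A b x0 x k \<le>
     ((1 - 1 / scaled_cond A)^2 - min ((coh_min A)^2 * (1 - coh_min A) / (1 + coh_min A))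
                                       ((coh_max A)^2 * (1 - coh_max A) / (1 + coh_max A))
                                 / scaled_cond A) ^ k * (norm (x - x0))^2"
proof
  fix k :: nat
  define c where "c = ((1 - 1 / scaled_cond A)^2 - min ((coh_min A)^2 * (1 - coh_min A) / (1 + coh_min A))
                                       ((coh_max A)^2 * (1 - coh_max A) / (1 + coh_max A))
                                 / scaled_cond A)"
  define OP where "OP = (ordered_pairs::('m\<times>'m) set)"
  define N where "N = real (card OP)"
  have os: "(\<Sum>p\<in>OP. (norm (x - tsk_step A b xk p))^2) \<le> c * N * (norm (x - xk))^2" for xk
    using one_step[OF assms, of xk] unfolding c_def OP_def N_def by simp
  have N: "N = real CARD('m) * (real CARD('m) - 1)" unfolding N_def OP_def by (rule card_op)
  have "CARD('n) \<ge> 1" by (simp add: Suc_leI)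
  hence m2: "real CARD('m) \<ge> 2" using assms(1) by linarith
  have N0: "N > 0" unfolding N using m2 by simp
  have c0: "c \<ge> 0"
  proof -
    obtain i :: 'n where True by blast
    have "0 \<le> (\<Sum>p\<in>OP. (norm (x - tsk_step A b (x - axis i 1) p))^2)" by (simp add: sum_nonneg)
    also have "\<dots> \<le> c * N * (norm (x - (x - axis i 1)))^2" by (rule os)
    also have "\<dots> = c * N" by simp
    finally show ?thesis using N0 by (simp add: zero_le_mult_iff)
  qed
  define T where "T k x0 = (\<Sum>ps\<in>pair_seqs k. (norm (x - tsk_iter A b x0 ps))^2)" for k x0
  have Tb: "T k y \<le> (c*N)^k * (norm (x - y))^2" for y
  proof (induction k arbitrary: y)
    case 0
    have "(pair_seqs 0 :: ('m\<times>'m) list set) = {[]}" unfolding pair_seqs_def by auto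
    thus ?case unfolding T_def tsk_iter_def by simp
  next
    case (Suc k)
    have "T (Suc k) y = (\<Sum>p\<in>OP. T k (tsk_step A b y p))"
      unfolding T_def OP_def sum_seqs_succ tsk_iter_def by simp
    also have "\<dots> \<le> (\<Sum>p\<in>OP. (c*N)^k * (norm (x - tsk_step A b y p))^2)"
      by (rule sum_mono) (rule Suc.IH)
    also have "\<dots> = (c*N)^k * (\<Sum>p\<in>OP. (norm (x - tsk_step A b y p))^2)"
      by (simp add: sum_distrib_left)
    also have "\<dots> \<le> (c*N)^k * (c * N * (norm (x - y))^2)"
      using os[of y] c0 N0 by (intro mult_left_mono) auto
    also have "\<dots> = (c*N)^Suc k * (norm (x - y))^2" by simp
    finally show ?case .
  qed
  have fc: "finite (pair_seqs k :: ('m\<times>'m) list set)" "card (pair_seqs k :: ('m\<times>'m) list set) = card OP ^ k"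
    using seqs_fin_card unfolding OP_def by blast+
  have ne: "(pair_seqs k :: ('m\<times>'m) list set) \<noteq> {}"
    using fc N0 unfolding N_def by (metis card.empty gr_implies_not0 of_nat_0 power_not_zero zero_less_iff_neq_zero of_nat_less_iff)
  have "tsk_expected_sq_err A b x0 x k = T k x0 / N^k"
    unfolding tsk_expected_sq_err_def T_def N_def
    by (subst integral_pmf_of_set[OF ne fc(1)]) (simp add: fc(2))
  also have "\<dots> \<le> (c*N)^k * (norm (x - x0))^2 / N^k"
    using Tb[of x0] N0 by (simp add: divide_right_mono)
  also have "\<dots> = c^k * (norm (x - x0))^2" using N0 by (simp add: power_mult_distrib)
  finally show "tsk_expected_sq_err A b x0 x k \<le> c^k * (norm (x - x0))^2" .
qed

end
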